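(* Let $B$ be a Boolean algebra, let $U,V,W\subset B^n$ be Boolean domains over $B$ with $U\cup V\subset W$, and let $F:U\to V$ be a Boolean isomorphism. Then there is a Boolean isomorphism $F':W\to W$ whose restriction to $U$ is $F$.
   Context: $B$ is a fixed Boolean algebra, with operations $\vee,\wedge$, complement, and symmetric difference $a\triangle b=(a\setminus b)\vee(b\setminus a)$. A Boolean function $f:B^n\to B$ is a function given by a polynomial expression built from the variables, elements of $B$, and the Boolean operations $\vee,\wedge$ and complement (e.g. $f(x_1,x_2)=(x_1\vee x_2)\triangle a$ with $a\in B$ fixed). A Boolean domain is a set $V=\{x\in B^n: f(x)=0\}$ for some Boolean function $f:B^n\to B$. If $U\subset B^n$ and $V\subset B^m$ are Boolean domains, a map $F:U\to V$ is a Boolean transformation if there are Boolean functions $F_1,\dots,F_m:B^n\to B$ with $F(x)=(F_1(x),\dots,F_m(x))$ for all $x\in U$. A Boolean isomorphism is a bijective Boolean transformation. *)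

theory Defs
  imports Main
begin

text \<open>Points of B^n are lists of length n over a Boolean algebra 'a.
  Boolean functions B^n -> B: functions given by polynomial expressions built
  from the variables x_1..x_n, constants of B, join, meet and complement.\<close>

datatype 'a bexp = Var nat | Const 'a | Join "'a bexp" "'a bexp"
  | Meet "'a bexp" "'a bexp" | Compl "'a bexp"

fun beval :: "'a::boolean_algebra bexp \<Rightarrow> 'a list \<Rightarrow> 'a" where
  "beval (Var i) x = x ! i"
| "beval (Const c) x = c"
| "beval (Join e1 e2) x = sup (beval e1 x) (beval e2 x)"
| "beval (Meet e1 e2) x = inf (beval e1 x) (beval e2 x)"
| "beval (Compl e) x = - beval e x"

fun bvars_below :: "nat \<Rightarrow> 'a bexp \<Rightarrow> bool" where
  "bvars_below n (Var i) = (i < n)"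
| "bvars_below n (Const c) = True"
| "bvars_below n (Join e1 e2) = (bvars_below n e1 \<and> bvars_below n e2)"
| "bvars_below n (Meet e1 e2) = (bvars_below n e1 \<and> bvars_below n e2)"
| "bvars_below n (Compl e) = bvars_below n e"

definition bool_points :: "nat \<Rightarrow> 'a list set" where
  "bool_points n = {x. length x = n}"

definition bool_fun :: "nat \<Rightarrow> ('a::boolean_algebra list \<Rightarrow> 'a) \<Rightarrow> bool" where
  "bool_fun n f \<longleftrightarrow> (\<exists>e. bvars_below n e \<and> (\<forall>x\<in>bool_points n. f x = beval e x))"

definition bool_domain :: "nat \<Rightarrow> 'a::boolean_algebra list set \<Rightarrow> bool" where
  "bool_domain n V \<longleftrightarrow> (\<exists>f. bool_fun n f \<and> V = {x\<in>bool_points n. f x = bot})"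

definition bool_trans ::
  "nat \<Rightarrow> nat \<Rightarrow> ('a::boolean_algebra list \<Rightarrow> 'a list) \<Rightarrow> 'a list set \<Rightarrow> 'a list set \<Rightarrow> bool" where
  "bool_trans n m F U V \<longleftrightarrow>
     F ` U \<subseteq> V \<and>
     (\<exists>Fs. length Fs = m \<and> (\<forall>g\<in>set Fs. bool_fun n g) \<and> (\<forall>x\<in>U. F x = map (\<lambda>g. g x) Fs))"

definition bool_iso ::
  "nat \<Rightarrow> nat \<Rightarrow> ('a::boolean_algebra list \<Rightarrow> 'a list) \<Rightarrow> 'a list set \<Rightarrow> 'a list set \<Rightarrow> bool" where
  "bool_iso n m F U V \<longleftrightarrow> bool_trans n m F U V \<and> bij_betw F U V"

end

theory Submission
  imports Defs
begin

definition lit :: "bool \<Rightarrow> 'a::boolean_algebra \<Rightarrow> 'a" where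
  "lit b a = (if b then a else - a)"

fun bconj :: "bool list \<Rightarrow> 'a::boolean_algebra list \<Rightarrow> 'a" where
  "bconj (b#bs) (a#as) = inf (lit b a) (bconj bs as)"
| "bconj _ _ = top"

definition bsup :: "'a::boolean_algebra list \<Rightarrow> 'a" where
  "bsup xs = foldr sup xs bot"

lemma bsup_simps[simp]: "bsup [] = bot" "bsup (x#xs) = sup x (bsup xs)"
  "bsup (xs @ ys) = sup (bsup xs) (bsup ys)"
  by (induction xs) (auto simp: bsup_def sup_assoc)

lemma bsup_concat: "bsup (concat xss) = bsup (map bsup xss)"
  by (induction xss) auto

lemma bsup_inf: "inf (bsup xs) a = bsup (map (\<lambda>x. inf x a) xs)"
  by (induction xs) (auto simp: inf_sup_distrib2)

lemma bsup_bot_iff: "bsup xs = bot \<longleftrightarrow> (\<forall>x\<in>set xs. x = bot)"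
  by (induction xs) auto

lemma bsup_01: "\<forall>x\<in>set xs. x = d \<or> x = bot \<Longrightarrow> bsup xs = (if d \<in> set xs then d else bot)"
  by (induction xs) auto

lemma conj_append: "length bs = length as \<Longrightarrow> bconj (bs @ cs) (as @ ds) = inf (bconj bs as) (bconj cs ds)"
  by (induction bs as rule: list_induct2) (auto simp: inf_assoc)

lemma lit_partition: "sup (inf (lit True a) c) (inf (lit False a) c) = c"
  by (simp add: lit_def inf_sup_distrib2[symmetric] del: inf_sup_distrib2)

lemma conj_partition: "bsup (map (\<lambda>\<beta>. bconj \<beta> L) (List.n_lists (length L) [True,False])) = top"
proof (induction L)
  case Nil then show ?case by simp
next
  case (Cons a L)
  have "bsup (map (\<lambda>\<beta>. bconj \<beta> (a#L)) (List.n_lists (length (a#L)) [True,False]))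
     = bsup (map (\<lambda>ys. sup (inf (lit True a) (bconj ys L)) (inf (lit False a) (bconj ys L))) (List.n_lists (length L) [True,False]))"
    by (simp add: bsup_concat map_concat comp_def)
  also have "\<dots> = bsup (map (\<lambda>ys. bconj ys L) (List.n_lists (length L) [True,False]))"
    by (simp only: lit_partition)
  finally show ?case using Cons by simp
qed

lemma inf4_bot: "inf p q = bot \<Longrightarrow> inf (inf r p) (inf s q) = (bot::'a::boolean_algebra)"
proof -
  assume h: "inf p q = bot"
  have "inf (inf r p) (inf s q) \<le> inf p q" by (intro inf_mono) auto
  then show ?thesis using h le_bot by metis
qed

lemma conj_disjoint: "length \<beta> = length L \<Longrightarrow> length \<gamma> = length L \<Longrightarrow> \<beta> \<noteq> \<gamma> \<Longrightarrow>
  inf (bconj \<beta> L) (bconj \<gamma> L) = bot"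
proof (induction \<beta> L arbitrary: \<gamma> rule: list_induct2)
  case Nil then show ?case by simp
next
  case (Cons b bs a as)
  then obtain c cs where g: "\<gamma> = c # cs" "length cs = length as" by (cases \<gamma>) auto
  show ?case
  proof (cases "b = c")
    case True
    then have "bs \<noteq> cs" using Cons g by auto
    then have "inf (bconj bs as) (bconj cs as) = bot" using Cons g by auto
    then show ?thesis using g True by (simp add: inf4_bot)
  next
    case False
    then have "inf (lit b a) (lit c a) = bot" by (auto simp: lit_def)
    then show ?thesis using g by (simp add: inf4_bot inf_commute)
  qed
qed

lemma conj_nth: "length \<beta> = length L \<Longrightarrow> j < length L \<Longrightarrow>
  inf (L ! j) (bconj \<beta> L) = (if \<beta> ! j then bconj \<beta> L else bot)"
proof (induction \<beta> L arbitrary: j rule: list_induct2)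
  case Nil then show ?case by simp
next
  case (Cons b bs a as)
  show ?case
  proof (cases j)
    case 0 then show ?thesis by (cases b) (simp_all add: lit_def inf_assoc[symmetric])
  next
    case (Suc j')
    then have "inf (as ! j') (bconj bs as) = (if bs ! j' then bconj bs as else bot)" using Cons by auto
    then show ?thesis using Suc
      by (simp add: inf_left_commute[of "as ! j'"]) 
  qed
qed

lemma le_conj_nth: "d \<le> bconj \<beta> L \<Longrightarrow> length \<beta> = length L \<Longrightarrow> j < length L \<Longrightarrow>
  inf (L ! j) d = (if \<beta> ! j then d else bot)"
proof -
  assume a: "d \<le> bconj \<beta> L" "length \<beta> = length L" "j < length L"
  have "inf (L ! j) d = inf (inf (L ! j) (bconj \<beta> L)) d" using a(1)
    by (simp add: inf_assoc inf.absorb2)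
  then show ?thesis using conj_nth[OF a(2,3)] a(1) by (simp add: inf.absorb2)
qed

lemma le_conj_intro: "length \<beta> = length L \<Longrightarrow>
  (\<And>j. j < length L \<Longrightarrow> inf (L ! j) d = (if \<beta> ! j then d else bot)) \<Longrightarrow> d \<le> bconj \<beta> L"
proof (induction \<beta> L rule: list_induct2)
  case Nil then show ?case by simp
next
  case (Cons b bs a as)
  have h0: "inf a d = (if b then d else bot)" using Cons(3)[of 0] by simp
  have "d \<le> bconj bs as"
  proof (rule Cons(2))
    fix j assume "j < length as" then show "inf (as ! j) d = (if bs ! j then d else bot)"
      using Cons(3)[of "Suc j"] by simp
  qed
  moreover have "d \<le> lit b a" using h0 proof (cases b)
    case True then show ?thesis using h0 by (simp add: lit_def inf.absorb_iff2 inf_commute)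
  next
    case False then show ?thesis using h0 by (simp add: lit_def inf_shunt[symmetric] inf_commute)
  qed
  ultimately show ?case by simp
qed

fun cl :: "'a bexp \<Rightarrow> 'a list" where
  "cl (Var i) = []" | "cl (Const c) = [c]" | "cl (Join a b) = cl a @ cl b"
| "cl (Meet a b) = cl a @ cl b" | "cl (Compl a) = cl a"

fun bev :: "('a \<Rightarrow> bool) \<Rightarrow> (nat \<Rightarrow> bool) \<Rightarrow> 'a bexp \<Rightarrow> bool" where
  "bev c v (Var i) = v i" | "bev c v (Const k) = c k"
| "bev c v (Join a b) = (bev c v a \<or> bev c v b)"
| "bev c v (Meet a b) = (bev c v a \<and> bev c v b)"
| "bev c v (Compl a) = (\<not> bev c v a)"

lemma inf_compl_loc: "inf (- a) d = inf (- (inf a d)) (d::'a::boolean_algebra)"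
  by (simp add: inf_sup_distrib2)

lemma locality: "bvars_below n e \<Longrightarrow> (\<And>i. i < n \<Longrightarrow> inf (y ! i) d = inf (z ! i) d) \<Longrightarrow>
  inf (beval e y) d = inf (beval e z) (d::'a::boolean_algebra)"
proof (induction e)
  case (Join e1 e2) then show ?case by (simp add: inf_sup_distrib2)
next
  case (Meet e1 e2)
  then have "inf (beval e1 y) d = inf (beval e1 z) d" "inf (beval e2 y) d = inf (beval e2 z) d" by auto
  have "inf (beval (Meet e1 e2) y) d = inf (inf (beval e1 y) d) (inf (beval e2 y) d)"
    "inf (beval (Meet e1 e2) z) d = inf (inf (beval e1 z) d) (inf (beval e2 z) d)"
    by (simp_all add: inf_aci)
  then show ?case using \<open>inf (beval e1 y) d = inf (beval e1 z) d\<close> \<open>inf (beval e2 y) d = inf (beval e2 z) d\<close> by simp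
next
  case (Compl e)
  then have "inf (beval e y) d = inf (beval e z) d" by auto
  then show ?case using inf_compl_loc[of "beval e y" d] inf_compl_loc[of "beval e z" d] by simp
qed auto

lemma bev_loc: "bvars_below n e \<Longrightarrow> (\<And>k. k \<in> set (cl e) \<Longrightarrow> inf k d = (if c k then d else bot)) \<Longrightarrow>
  (\<And>i. i < n \<Longrightarrow> inf (x ! i) d = (if v i then d else bot)) \<Longrightarrow>
  inf (beval e x) d = (if bev c v e then d else (bot::'a::boolean_algebra))"
proof (induction e)
  case (Join e1 e2) then show ?case by (simp add: inf_sup_distrib2)
next
  case (Meet e1 e2)
  then have h: "inf (beval e1 x) d = (if bev c v e1 then d else bot)" "inf (beval e2 x) d = (if bev c v e2 then d else bot)" by auto
  have "inf (beval (Meet e1 e2) x) d = inf (inf (beval e1 x) d) (inf (beval e2 x) d)"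
    by (simp add: inf_aci)
  then show ?case using h by simp
next
  case (Compl e)
  then have h: "inf (beval e x) d = (if bev c v e then d else bot)" by auto
  show ?case using inf_compl_loc[of "beval e x" d] h by (cases "bev c v e") simp_all
qed auto

definition cv :: "'a list \<Rightarrow> bool list \<Rightarrow> 'a \<Rightarrow> bool" where
  "cv ks \<tau> k = (\<exists>j<length ks. ks ! j = k \<and> \<tau> ! j)"

definition ev :: "'a list \<Rightarrow> bool list \<Rightarrow> bool list \<Rightarrow> 'a bexp \<Rightarrow> bool" where
  "ev ks \<tau> \<alpha> e = bev (cv ks \<tau>) (\<lambda>i. \<alpha> ! i) e"

lemma const_dec: "length \<tau> = length ks \<Longrightarrow> d \<le> bconj \<tau> ks \<Longrightarrow> k \<in> set ks \<Longrightarrow>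
  inf k d = (if cv ks \<tau> k then d else (bot::'a::boolean_algebra))"
proof -
  assume a: "length \<tau> = length ks" "d \<le> bconj \<tau> ks" "k \<in> set ks"
  have h: "\<And>j. j < length ks \<Longrightarrow> inf (ks ! j) d = (if \<tau> ! j then d else bot)"
    using le_conj_nth[OF a(2) a(1)] by blast
  show ?thesis
  proof (cases "cv ks \<tau> k")
    case True then show ?thesis using h unfolding cv_def by force
  next
    case False
    obtain j where "j < length ks" "ks ! j = k" using a(3) by (auto simp: in_set_conv_nth)
    then show ?thesis using h False unfolding cv_def by force
  qed
qed

lemma LOC_eval: "length \<tau> = length ks \<Longrightarrow> length \<alpha> = n \<Longrightarrow> length x = n \<Longrightarrow>
  d \<le> bconj \<tau> ks \<Longrightarrow> d \<le> bconj \<alpha> x \<Longrightarrow> bvars_below n e \<Longrightarrow> set (cl e) \<subseteq> set ks \<Longrightarrow>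
  inf (beval e x) d = (if ev ks \<tau> \<alpha> e then d else (bot::'a::boolean_algebra))"
  unfolding ev_def
  apply (rule bev_loc[where n=n])
    apply assumption
   apply (rule const_dec; auto)
  using le_conj_nth[of d \<alpha> x] by auto

definition litE :: "bool \<Rightarrow> 'a bexp \<Rightarrow> 'a bexp" where
  "litE b l = (if b then l else Compl l)"

fun conjE :: "bool list \<Rightarrow> 'a::boolean_algebra bexp list \<Rightarrow> 'a bexp" where
  "conjE (b#bs) (l#ls) = Meet (litE b l) (conjE bs ls)"
| "conjE _ _ = Const top"

definition joinE :: "'a::boolean_algebra bexp list \<Rightarrow> 'a bexp" where
  "joinE es = foldr Join es (Const bot)"

definition leaves :: "'a list \<Rightarrow> nat \<Rightarrow> 'a bexp list" where
  "leaves ks n = map Const ks @ map Var [0..<n]"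

lemma beval_conjE: "beval (conjE \<beta> ls) x = bconj \<beta> (map (\<lambda>l. beval l x) ls)"
  by (induction \<beta> ls rule: conjE.induct) (auto simp: litE_def lit_def)

lemma beval_joinE: "beval (joinE es) x = bsup (map (\<lambda>e. beval e x) es)"
  by (induction es) (auto simp: joinE_def)

lemma bvars_conjE: "(\<forall>l\<in>set ls. bvars_below n l) \<Longrightarrow> bvars_below n (conjE \<beta> ls)"
  by (induction \<beta> ls rule: conjE.induct) (auto simp: litE_def)

lemma bvars_joinE: "(\<forall>e\<in>set es. bvars_below n e) \<Longrightarrow> bvars_below n (joinE es)"
  by (induction es) (auto simp: joinE_def)

lemma map_leaves: "length x = n \<Longrightarrow> map (\<lambda>l. beval l x) (leaves ks n) = ks @ x"
  by (auto simp: leaves_def comp_def intro: nth_equalityI)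

lemma bvars_leaves: "\<forall>l\<in>set (leaves ks n). bvars_below n l"
  by (auto simp: leaves_def)

definition EE :: "'a::boolean_algebra list \<Rightarrow> nat \<Rightarrow> (bool list \<Rightarrow> bool list \<Rightarrow> bool list) \<Rightarrow> nat \<Rightarrow> 'a bexp" where
  "EE ks n \<sigma> i = joinE (map (\<lambda>\<beta>. conjE \<beta> (leaves ks n))
     (filter (\<lambda>\<beta>. \<sigma> (take (length ks) \<beta>) (drop (length ks) \<beta>) ! i) (List.n_lists (length ks + n) [True,False])))"

definition TT :: "'a::boolean_algebra list \<Rightarrow> nat \<Rightarrow> (bool list \<Rightarrow> bool list \<Rightarrow> bool list) \<Rightarrow> 'a list \<Rightarrow> 'a list" where
  "TT ks n \<sigma> x = map (\<lambda>i. beval (EE ks n \<sigma> i) x) [0..<n]"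

lemma bvars_EE: "bvars_below n (EE ks n \<sigma> i)"
  unfolding EE_def using bvars_leaves by (intro bvars_joinE) (auto intro!: bvars_conjE)

lemma in_nlists: "\<beta> \<in> set (List.n_lists m [True,False]) \<longleftrightarrow> length \<beta> = m"
  by (auto simp: set_n_lists)

lemma LOC_T: "length \<tau> = length ks \<Longrightarrow> length \<alpha> = n \<Longrightarrow> length x = n \<Longrightarrow>
  d \<le> bconj \<tau> ks \<Longrightarrow> d \<le> bconj \<alpha> x \<Longrightarrow> i < n \<Longrightarrow>
  inf (TT ks n \<sigma> x ! i) d = (if \<sigma> \<tau> \<alpha> ! i then d else (bot::'a::boolean_algebra))"
proof -
  assume a: "length \<tau> = length ks" "length \<alpha> = n" "length x = n"
    "d \<le> bconj \<tau> ks" "d \<le> bconj \<alpha> x" "i < n"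
  define L where "L = ks @ x"
  define P where "P = (\<lambda>\<beta>. \<sigma> (take (length ks) \<beta>) (drop (length ks) \<beta>) ! i)"
  define NL where "NL = List.n_lists (length ks + n) [True,False]"
  have dle: "d \<le> bconj (\<tau> @ \<alpha>) L" using a by (simp add: L_def conj_append)
  have lenL: "length L = length ks + n" using a by (simp add: L_def)
  have T: "TT ks n \<sigma> x ! i = bsup (map (\<lambda>\<beta>. bconj \<beta> L) (filter P NL))"
    using a by (simp add: TT_def EE_def beval_joinE comp_def beval_conjE map_leaves L_def P_def NL_def)
  have each: "inf (bconj \<beta> L) d = (if \<beta> = \<tau> @ \<alpha> then d else bot)" if "\<beta> \<in> set NL" for \<beta>
  proof (cases "\<beta> = \<tau> @ \<alpha>")
    case True then show ?thesis using dle by (simp add: inf.absorb2)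
  next
    case False
    have "length \<beta> = length L" using that lenL by (simp add: NL_def in_nlists)
    then have "inf (bconj \<beta> L) (bconj (\<tau> @ \<alpha>) L) = bot" using False a lenL
      by (intro conj_disjoint) auto
    moreover have "inf (bconj \<beta> L) d \<le> inf (bconj \<beta> L) (bconj (\<tau> @ \<alpha>) L)"
      using dle by (intro inf_mono) auto
    ultimately show ?thesis using False le_bot by metis
  qed
  have "inf (TT ks n \<sigma> x ! i) d = bsup (map (\<lambda>\<beta>. inf (bconj \<beta> L) d) (filter P NL))"
    by (simp add: T bsup_inf comp_def)
  also have "\<dots> = bsup (map (\<lambda>\<beta>. if \<beta> = \<tau> @ \<alpha> then d else bot) (filter P NL))"
    using each by (intro arg_cong[where f=bsup] map_cong) auto
  also have "\<dots> = (if P (\<tau> @ \<alpha>) then d else bot)"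
  proof (cases "P (\<tau> @ \<alpha>)")
    case True
    then have "\<tau> @ \<alpha> \<in> set (filter P NL)" using a by (simp add: NL_def in_nlists)
    then show ?thesis using True by (subst bsup_01) (auto simp: image_iff intro: bexI[of _ "\<tau> @ \<alpha>"])
  next
    case False
    then show ?thesis by (auto simp: bsup_bot_iff)
  qed
  also have "P (\<tau> @ \<alpha>) = \<sigma> \<tau> \<alpha> ! i" using a by (simp add: P_def)
  finally show ?thesis .
qed

lemma pw: "length x = n \<Longrightarrow>
  (\<And>\<tau> \<alpha>. length \<tau> = length ks \<Longrightarrow> length \<alpha> = n \<Longrightarrow> inf (bconj \<tau> ks) (bconj \<alpha> x) \<noteq> bot \<Longrightarrow>
     inf a (inf (bconj \<tau> ks) (bconj \<alpha> x)) = inf b (inf (bconj \<tau> ks) (bconj \<alpha> x))) \<Longrightarrow>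
  a = (b::'a::boolean_algebra)"
proof -
  assume a: "length x = n" and h: "\<And>\<tau> \<alpha>. length \<tau> = length ks \<Longrightarrow> length \<alpha> = n \<Longrightarrow> inf (bconj \<tau> ks) (bconj \<alpha> x) \<noteq> bot \<Longrightarrow>
     inf a (inf (bconj \<tau> ks) (bconj \<alpha> x)) = inf b (inf (bconj \<tau> ks) (bconj \<alpha> x))"
  define L where "L = ks @ x"
  define NL where "NL = List.n_lists (length L) [True,False]"
  have eq: "inf (bconj \<beta> L) a = inf (bconj \<beta> L) b" if "\<beta> \<in> set NL" for \<beta>
  proof -
    have lb: "length \<beta> = length ks + n" using that a by (simp add: NL_def in_nlists L_def)
    have sp: "bconj \<beta> L = inf (bconj (take (length ks) \<beta>) ks) (bconj (drop (length ks) \<beta>) x)"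
      using conj_append[of "take (length ks) \<beta>" ks "drop (length ks) \<beta>" x] lb by (simp add: L_def)
    show ?thesis
    proof (cases "bconj \<beta> L = bot")
      case True then show ?thesis by simp
    next
      case False then show ?thesis using h[of "take (length ks) \<beta>" "drop (length ks) \<beta>"] lb sp
        by (simp add: inf_commute)
    qed
  qed
  have "a = inf (bsup (map (\<lambda>\<beta>. bconj \<beta> L) NL)) a" by (simp add: conj_partition NL_def)
  also have "\<dots> = bsup (map (\<lambda>\<beta>. inf (bconj \<beta> L) a) NL)" by (simp add: bsup_inf comp_def)
  also have "\<dots> = bsup (map (\<lambda>\<beta>. inf (bconj \<beta> L) b) NL)" using eq by (intro arg_cong[where f=bsup] map_cong) auto
  also have "\<dots> = inf (bsup (map (\<lambda>\<beta>. bconj \<beta> L) NL)) b" by (simp add: bsup_inf comp_def)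
  also have "\<dots> = b" by (simp add: conj_partition NL_def)
  finally show ?thesis .
qed

lemma piece_exists: "c \<noteq> bot \<Longrightarrow> \<exists>\<alpha>. length \<alpha> = length x \<and> inf c (bconj \<alpha> x) \<noteq> (bot::'a::boolean_algebra)"
proof (rule ccontr)
  assume c: "c \<noteq> bot" and n: "\<not> (\<exists>\<alpha>. length \<alpha> = length x \<and> inf c (bconj \<alpha> x) \<noteq> bot)"
  define NL where "NL = List.n_lists (length x) [True,False]"
  have "c = inf (bsup (map (\<lambda>\<beta>. bconj \<beta> x) NL)) c" by (simp add: conj_partition NL_def)
  also have "\<dots> = bsup (map (\<lambda>\<beta>. inf (bconj \<beta> x) c) NL)" by (simp add: bsup_inf comp_def)
  also have "\<dots> = bot" using n by (auto simp: bsup_bot_iff NL_def in_nlists inf_commute)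
  finally show False using c by simp
qed

definition pt :: "nat \<Rightarrow> 'a::boolean_algebra \<Rightarrow> bool list \<Rightarrow> 'a list \<Rightarrow> 'a list" where
  "pt n c \<alpha> z = map (\<lambda>i. sup (if \<alpha> ! i then c else bot) (inf (z ! i) (- c))) [0..<n]"

lemma pt_len[simp]: "length (pt n c \<alpha> z) = n" by (simp add: pt_def)

lemma pt_c: "i < n \<Longrightarrow> inf (pt n c \<alpha> z ! i) c = (if \<alpha> ! i then c else bot)"
  by (simp add: pt_def inf_sup_distrib2 inf_assoc)

lemma pt_nc: "i < n \<Longrightarrow> inf (pt n c \<alpha> z ! i) (- c) = inf (z ! i) (- c)"
  by (simp add: pt_def inf_sup_distrib2 inf_assoc)

lemma pt_le: "length \<alpha> = n \<Longrightarrow> c \<le> bconj \<alpha> (pt n c \<alpha> z)"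
  by (rule le_conj_intro) (auto simp: pt_c)

lemma split_c: "(a::'a::boolean_algebra) = sup (inf a c) (inf a (- c))"
  by (simp add: inf_sup_distrib1[symmetric])

lemma beval_pt: "length \<tau> = length ks \<Longrightarrow> length \<alpha> = n \<Longrightarrow> length z = n \<Longrightarrow>
  bvars_below n e \<Longrightarrow> set (cl e) \<subseteq> set ks \<Longrightarrow>
  beval e (pt n (bconj \<tau> ks) \<alpha> z) = sup (if ev ks \<tau> \<alpha> e then bconj \<tau> ks else bot) (inf (beval e z) (- bconj \<tau> ks))"
proof -
  assume a: "length \<tau> = length ks" "length \<alpha> = n" "length z = n" "bvars_below n e" "set (cl e) \<subseteq> set ks"
  let ?c = "bconj \<tau> ks" and ?p = "pt n (bconj \<tau> ks) \<alpha> z"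
  have 1: "inf (beval e ?p) ?c = (if ev ks \<tau> \<alpha> e then ?c else bot)"
    using a by (intro LOC_eval[where n=n]) (auto intro: pt_le)
  have 2: "inf (beval e ?p) (- ?c) = inf (beval e z) (- ?c)"
    using a by (intro locality[where n=n]) (auto simp: pt_nc)
  show ?thesis using split_c[of "beval e ?p" ?c] 1 2 by simp
qed

lemma zero_not_ev: "length \<tau> = length ks \<Longrightarrow> length \<alpha> = n \<Longrightarrow> length x = n \<Longrightarrow>
  d \<le> bconj \<tau> ks \<Longrightarrow> d \<le> bconj \<alpha> x \<Longrightarrow> bvars_below n e \<Longrightarrow> set (cl e) \<subseteq> set ks \<Longrightarrow>
  beval e x = bot \<Longrightarrow> d \<noteq> bot \<Longrightarrow> \<not> ev ks \<tau> \<alpha> e"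
  using LOC_eval[of \<tau> ks \<alpha> n x d e] by auto

lemma not_ev_zero: "length \<tau> = length ks \<Longrightarrow> length \<alpha> = n \<Longrightarrow> length x = n \<Longrightarrow>
  d \<le> bconj \<tau> ks \<Longrightarrow> d \<le> bconj \<alpha> x \<Longrightarrow> bvars_below n e \<Longrightarrow> set (cl e) \<subseteq> set ks \<Longrightarrow>
  \<not> ev ks \<tau> \<alpha> e \<Longrightarrow> inf (beval e x) d = bot"
  using LOC_eval[of \<tau> ks \<alpha> n x d e] by auto

lemma LOC_T_le: "length \<tau> = length ks \<Longrightarrow> length \<alpha> = n \<Longrightarrow> length x = n \<Longrightarrow>
  d \<le> bconj \<tau> ks \<Longrightarrow> d \<le> bconj \<alpha> x \<Longrightarrow> length (\<sigma> \<tau> \<alpha>) = n \<Longrightarrow>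
  d \<le> bconj (\<sigma> \<tau> \<alpha>) (TT ks n \<sigma> (x::'a::boolean_algebra list))"
proof (rule le_conj_intro)
  assume a: "length \<tau> = length ks" "length \<alpha> = n" "length x = n"
  "d \<le> bconj \<tau> ks" "d \<le> bconj \<alpha> x" "length (\<sigma> \<tau> \<alpha>) = n"
  then show "length (\<sigma> \<tau> \<alpha>) = length (TT ks n \<sigma> x)" by (simp add: TT_def)
  fix j assume "j < length (TT ks n \<sigma> x)"
  then have "j < n" by (simp add: TT_def)
  then show "inf (TT ks n \<sigma> x ! j) d = (if \<sigma> \<tau> \<alpha> ! j then d else bot)"
    using LOC_T[OF a(1-5)] by blast
qed

lemma ext_perm: "finite W \<Longrightarrow> U \<subseteq> W \<Longrightarrow> V \<subseteq> W \<Longrightarrow> bij_betw f U V \<Longrightarrow>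
  \<exists>s. bij_betw s W W \<and> (\<forall>a\<in>U. s a = f a)"
proof -
  assume a: "finite W" "U \<subseteq> W" "V \<subseteq> W" "bij_betw f U V"
  have "card U = card V" using a(4) by (rule bij_betw_same_card)
  then have "card (W - U) = card (W - V)" using a by (simp add: card_Diff_subset finite_subset)
  then obtain g where g: "bij_betw g (W - U) (W - V)" using a(1) by (metis finite_Diff finite_same_card_bij)
  define s where "s = (\<lambda>x. if x \<in> U then f x else g x)"
  have "bij_betw s U V" using a(4) by (rule bij_betw_cong[THEN iffD1, rotated]) (simp add: s_def)
  moreover have "bij_betw s (W - U) (W - V)" using g by (rule bij_betw_cong[THEN iffD1, rotated]) (simp add: s_def)
  ultimately have "bij_betw s (U \<union> (W - U)) (V \<union> (W - V))" by (rule bij_betw_combine) auto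
  moreover have "U \<union> (W - U) = W" "V \<union> (W - V) = W" using a by auto
  ultimately show ?thesis by (auto simp: s_def)
qed

locale setting =
  fixes n :: nat and ks :: "'a::boolean_algebra list" and eu evv ew :: "'a bexp" and fes :: "'a bexp list"
    and F :: "'a list \<Rightarrow> 'a list" and U V W :: "'a list set"
  assumes bv: "bvars_below n eu" "bvars_below n evv" "bvars_below n ew" "\<forall>f\<in>set fes. bvars_below n f"
    and cs: "set (cl eu) \<subseteq> set ks" "set (cl evv) \<subseteq> set ks" "set (cl ew) \<subseteq> set ks"
       "\<forall>f\<in>set fes. set (cl f) \<subseteq> set ks"
    and lenF: "length fes = n"
    and Ud: "U = {x. length x = n \<and> beval eu x = bot}"
    and Vd: "V = {x. length x = n \<and> beval evv x = bot}"
    and Wd: "W = {x. length x = n \<and> beval ew x = bot}"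
    and Fd: "\<forall>x\<in>U. F x = map (\<lambda>f. beval f x) fes"
    and sub: "U \<union> V \<subseteq> W"
    and bij: "bij_betw F U V"
    and ne: "U \<noteq> {}"
begin

definition "Ut \<tau> = {\<alpha>. length \<alpha> = n \<and> \<not> ev ks \<tau> \<alpha> eu}"
definition "Vt \<tau> = {\<alpha>. length \<alpha> = n \<and> \<not> ev ks \<tau> \<alpha> evv}"
definition "Wt \<tau> = {\<alpha>. length \<alpha> = n \<and> \<not> ev ks \<tau> \<alpha> ew}"
definition "Ft \<tau> \<alpha> = map (\<lambda>f. ev ks \<tau> \<alpha> f) fes"

lemma a0: obtains a0 where "a0 \<in> U" using ne by blast

lemma b0: obtains b0 where "b0 \<in> V" using ne bij by (auto simp: bij_betw_def)

lemma pt_in: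
  assumes "length \<tau> = length ks" "length \<alpha> = n" "z \<in> {x. length x = n \<and> beval e x = bot}"
    "bvars_below n e" "set (cl e) \<subseteq> set ks" "\<not> ev ks \<tau> \<alpha> e"
  shows "pt n (bconj \<tau> ks) \<alpha> z \<in> {x. length x = n \<and> beval e x = bot}"
  using assms beval_pt[of \<tau> ks \<alpha> n z e] by simp

lemma ev_of_zero:
  assumes "length \<tau> = length ks" "length \<alpha> = n" "length x = n" "bvars_below n e" "set (cl e) \<subseteq> set ks"
    "beval e x = bot" "bconj \<tau> ks \<noteq> bot" "bconj \<tau> ks \<le> bconj \<alpha> x"
  shows "\<not> ev ks \<tau> \<alpha> e"
  using zero_not_ev[of \<tau> ks \<alpha> n x "bconj \<tau> ks" e] assms by simp

lemma Ut_Wt: assumes "length \<tau> = length ks" "bconj \<tau> ks \<noteq> bot" "\<alpha> \<in> Ut \<tau>" shows "\<alpha> \<in> Wt \<tau>"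
proof -
  obtain a0 where a0: "a0 \<in> U" by (rule a0)
  let ?p = "pt n (bconj \<tau> ks) \<alpha> a0"
  have "?p \<in> U" using pt_in[of \<tau> \<alpha> a0 eu] assms a0 bv cs by (simp add: Ud Ut_def)
  then have "?p \<in> W" using sub by auto
  moreover have "bconj \<tau> ks \<le> bconj \<alpha> ?p" using assms(3) by (intro pt_le) (simp add: Ut_def)
  ultimately show ?thesis using ev_of_zero[of \<tau> \<alpha> ?p ew] assms bv cs
    by (simp add: Wd Ut_def Wt_def)
qed

lemma Vt_Wt: assumes "length \<tau> = length ks" "bconj \<tau> ks \<noteq> bot" "\<alpha> \<in> Vt \<tau>" shows "\<alpha> \<in> Wt \<tau>"
proof -
  obtain b0 where b0: "b0 \<in> V" by (rule b0)
  let ?p = "pt n (bconj \<tau> ks) \<alpha> b0"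
  have "?p \<in> V" using pt_in[of \<tau> \<alpha> b0 evv] assms b0 bv cs by (simp add: Vd Vt_def)
  then have "?p \<in> W" using sub by auto
  moreover have "bconj \<tau> ks \<le> bconj \<alpha> ?p" using assms(3) by (intro pt_le) (simp add: Vt_def)
  ultimately show ?thesis using ev_of_zero[of \<tau> \<alpha> ?p ew] assms bv cs
    by (simp add: Wd Vt_def Wt_def)
qed

lemma F_pt:
  assumes "length \<tau> = length ks" "\<alpha> \<in> Ut \<tau>" "a0 \<in> U"
  shows "F (pt n (bconj \<tau> ks) \<alpha> a0) = map (\<lambda>f. sup (if ev ks \<tau> \<alpha> f then bconj \<tau> ks else bot) (inf (beval f a0) (- bconj \<tau> ks))) fes"
proof -
  have "pt n (bconj \<tau> ks) \<alpha> a0 \<in> U" using pt_in[of \<tau> \<alpha> a0 eu] assms bv cs by (simp add: Ud Ut_def)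
  then show ?thesis using Fd assms bv cs beval_pt[of \<tau> ks \<alpha> n a0] by (simp add: Ut_def Ud)
qed

lemma Ft_bij: assumes "length \<tau> = length ks" "bconj \<tau> ks \<noteq> bot" shows "bij_betw (Ft \<tau>) (Ut \<tau>) (Vt \<tau>)"
proof -
  let ?c = "bconj \<tau> ks"
  obtain a0 where a0: "a0 \<in> U" by (rule a0)
  have into: "Ft \<tau> \<alpha> \<in> Vt \<tau>" if "\<alpha> \<in> Ut \<tau>" for \<alpha>
  proof -
    let ?p = "pt n ?c \<alpha> a0"
    have pU: "?p \<in> U" using pt_in[of \<tau> \<alpha> a0 eu] assms a0 bv cs that by (simp add: Ud Ut_def)
    then have FV: "F ?p \<in> V" using bij by (auto simp: bij_betw_def)
    have le: "?c \<le> bconj (Ft \<tau> \<alpha>) (F ?p)"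
    proof (rule le_conj_intro)
      show "length (Ft \<tau> \<alpha>) = length (F ?p)" using FV by (simp add: Vd Ft_def lenF)
      fix j assume "j < length (F ?p)"
      then have j: "j < n" using FV by (simp add: Vd)
      show "inf (F ?p ! j) ?c = (if Ft \<tau> \<alpha> ! j then ?c else bot)"
        using F_pt[OF assms(1) that a0] j lenF
        by (simp add: Ft_def inf_sup_distrib2 inf_assoc)
    qed
    show ?thesis using ev_of_zero[of \<tau> "Ft \<tau> \<alpha>" "F ?p" evv] FV assms bv cs le
      by (simp add: Vd Vt_def Ft_def lenF)
  qed
  have inj: "inj_on (Ft \<tau>) (Ut \<tau>)"
  proof
    fix \<alpha> \<alpha>' assume h: "\<alpha> \<in> Ut \<tau>" "\<alpha>' \<in> Ut \<tau>" "Ft \<tau> \<alpha> = Ft \<tau> \<alpha>'"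
    let ?p = "pt n ?c \<alpha> a0" and ?p' = "pt n ?c \<alpha>' a0"
    have pU: "?p \<in> U" "?p' \<in> U" using pt_in[of \<tau> _ a0 eu] assms a0 bv cs h by (auto simp: Ud Ut_def)
    have "map (\<lambda>f. ev ks \<tau> \<alpha> f) fes = map (\<lambda>f. ev ks \<tau> \<alpha>' f) fes" using h(3) by (simp add: Ft_def)
    then have "F ?p = F ?p'" using F_pt[OF assms(1) h(1) a0] F_pt[OF assms(1) h(2) a0]
      by (simp add: map_eq_conv)
    then have pp: "?p = ?p'" using bij pU by (auto simp: bij_betw_def inj_on_def)
    show "\<alpha> = \<alpha>'"
    proof (rule nth_equalityI)
      show "length \<alpha> = length \<alpha>'" using h by (simp add: Ut_def)
      fix i assume "i < length \<alpha>"
      then have i: "i < n" using h by (simp add: Ut_def)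
      have "(if \<alpha> ! i then ?c else bot) = (if \<alpha>' ! i then ?c else bot)"
        using pt_c[OF i, of ?c \<alpha> a0] pt_c[OF i, of ?c \<alpha>' a0] pp by simp
      then show "\<alpha> ! i = \<alpha>' ! i" using assms(2) by (auto split: if_splits)
    qed
  qed
  have onto: "\<beta> \<in> Ft \<tau> ` Ut \<tau>" if "\<beta> \<in> Vt \<tau>" for \<beta>
  proof -
    obtain b0 where b0: "b0 \<in> V" by (rule b0)
    let ?q = "pt n ?c \<beta> b0"
    have qV: "?q \<in> V" using pt_in[of \<tau> \<beta> b0 evv] assms b0 bv cs that by (simp add: Vd Vt_def)
    then obtain x where x: "x \<in> U" "F x = ?q" using bij by (auto simp: bij_betw_def)
    have lx: "length x = n" using x by (simp add: Ud)
    obtain \<alpha> where al: "length \<alpha> = length x" "inf ?c (bconj \<alpha> x) \<noteq> bot"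
      using piece_exists[OF assms(2)] by blast
    define d where "d = inf ?c (bconj \<alpha> x)"
    have d: "d \<le> ?c" "d \<le> bconj \<alpha> x" "d \<noteq> bot" using al by (auto simp: d_def)
    have aU: "\<alpha> \<in> Ut \<tau>" using zero_not_ev[of \<tau> ks \<alpha> n x d eu] d x al lx assms bv cs
      by (simp add: Ud Ut_def)
    have "Ft \<tau> \<alpha> = \<beta>"
    proof (rule nth_equalityI)
      show "length (Ft \<tau> \<alpha>) = length \<beta>" using that by (simp add: Ft_def lenF Vt_def)
      fix j assume "j < length (Ft \<tau> \<alpha>)"
      then have j: "j < n" by (simp add: Ft_def lenF)
      have fj: "fes ! j \<in> set fes" using j lenF by simp
      have Fx: "F x ! j = beval (fes ! j) x" using Fd x(1) j lenF by simp
      have "inf (beval (fes ! j) x) d = (if ev ks \<tau> \<alpha> (fes ! j) then d else bot)"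
        using LOC_eval[of \<tau> ks \<alpha> n x d "fes ! j"] d al lx assms bv cs fj by simp
      then have "inf (F x ! j) d = (if ev ks \<tau> \<alpha> (fes ! j) then d else bot)" by (simp only: Fx)
      moreover have "inf (?q ! j) d = (if \<beta> ! j then d else bot)"
      proof -
        have "inf (?q ! j) d = inf (inf (?q ! j) ?c) d" using d(1) by (simp add: inf_assoc inf.absorb2)
        also have "\<dots> = inf (if \<beta> ! j then ?c else bot) d" by (simp only: pt_c[OF j])
        finally show ?thesis using d(1) by (simp add: inf.absorb2)
      qed
      ultimately show "Ft \<tau> \<alpha> ! j = \<beta> ! j" using x(2) d(3) j lenF
        by (auto simp: Ft_def split: if_splits)
    qed
    then show ?thesis using aU by blast
  qed
  show ?thesis unfolding bij_betw_def using inj into onto by blast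
qed


lemma piece_facts:
  assumes "length \<tau> = length ks" "length \<alpha> = n" "inf (bconj \<tau> ks) (bconj \<alpha> x) \<noteq> bot"
  shows "bconj \<tau> ks \<noteq> bot" "inf (bconj \<tau> ks) (bconj \<alpha> x) \<le> bconj \<tau> ks"
    "inf (bconj \<tau> ks) (bconj \<alpha> x) \<le> bconj \<alpha> x"
  using assms by auto

lemma T1:
  assumes H: "\<And>\<tau> \<alpha>. length \<tau> = length ks \<Longrightarrow> bconj \<tau> ks \<noteq> bot \<Longrightarrow> \<alpha> \<in> Wt \<tau> \<Longrightarrow> s \<tau> \<alpha> \<in> Wt \<tau>"
    and x: "x \<in> W"
  shows "TT ks n s x \<in> W"
proof -
  have lx: "length x = n" using x by (simp add: Wd)
  have "beval ew (TT ks n s x) = bot"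
  proof (rule pw[OF lx, where ks=ks])
    fix \<tau> \<alpha> assume a: "length \<tau> = length ks" "length \<alpha> = n" "inf (bconj \<tau> ks) (bconj \<alpha> x) \<noteq> bot"
    define d where "d = inf (bconj \<tau> ks) (bconj \<alpha> x)"
    have d: "d \<le> bconj \<tau> ks" "d \<le> bconj \<alpha> x" "d \<noteq> bot" using a by (auto simp: d_def)
    have cnz: "bconj \<tau> ks \<noteq> bot" using d(1,3) le_bot by metis
    have aW: "\<alpha> \<in> Wt \<tau>" using zero_not_ev[of \<tau> ks \<alpha> n x d ew] a d x bv cs by (simp add: Wd Wt_def)
    have sW: "s \<tau> \<alpha> \<in> Wt \<tau>" using H[OF a(1) cnz aW] by auto
    have le: "d \<le> bconj (s \<tau> \<alpha>) (TT ks n s x)" using LOC_T_le[of \<tau> ks \<alpha> n x d s] a d lx sW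
      by (simp add: Wt_def)
    have "inf (beval ew (TT ks n s x)) d = bot"
      using not_ev_zero[of \<tau> ks "s \<tau> \<alpha>" n "TT ks n s x" d ew] a d le sW bv cs
      by (simp add: Wt_def TT_def)
    then show "inf (beval ew (TT ks n s x)) (inf (bconj \<tau> ks) (bconj \<alpha> x)) = inf bot (inf (bconj \<tau> ks) (bconj \<alpha> x))"
      by (simp add: d_def)
  qed
  then show ?thesis by (simp add: Wd TT_def)
qed

lemma T2:
  assumes H: "\<And>\<tau> \<alpha>. length \<tau> = length ks \<Longrightarrow> bconj \<tau> ks \<noteq> bot \<Longrightarrow> \<alpha> \<in> Wt \<tau> \<Longrightarrow> f \<tau> \<alpha> \<in> Wt \<tau> \<and> g \<tau> (f \<tau> \<alpha>) = \<alpha>"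
    and x: "x \<in> W"
  shows "TT ks n g (TT ks n f x) = x"
proof -
  have lx: "length x = n" using x by (simp add: Wd)
  show ?thesis
  proof (rule nth_equalityI)
    show "length (TT ks n g (TT ks n f x)) = length x" using lx by (simp add: TT_def)
    fix i assume "i < length (TT ks n g (TT ks n f x))"
    then have i: "i < n" by (simp add: TT_def)
    show "TT ks n g (TT ks n f x) ! i = x ! i"
    proof (rule pw[OF lx, where ks=ks])
      fix \<tau> \<alpha> assume a: "length \<tau> = length ks" "length \<alpha> = n" "inf (bconj \<tau> ks) (bconj \<alpha> x) \<noteq> bot"
      define d where "d = inf (bconj \<tau> ks) (bconj \<alpha> x)"
      have d: "d \<le> bconj \<tau> ks" "d \<le> bconj \<alpha> x" "d \<noteq> bot" using a by (auto simp: d_def)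
    have cnz: "bconj \<tau> ks \<noteq> bot" using d(1,3) le_bot by metis
      have aW: "\<alpha> \<in> Wt \<tau>" using zero_not_ev[of \<tau> ks \<alpha> n x d ew] a d x bv cs by (simp add: Wd Wt_def)
      have fW: "f \<tau> \<alpha> \<in> Wt \<tau>" and gf: "g \<tau> (f \<tau> \<alpha>) = \<alpha>" using H[OF a(1) cnz aW] by auto
      have le: "d \<le> bconj (f \<tau> \<alpha>) (TT ks n f x)" using LOC_T_le[of \<tau> ks \<alpha> n x d f] a d lx fW
        by (simp add: Wt_def)
      have "inf (TT ks n g (TT ks n f x) ! i) d = (if g \<tau> (f \<tau> \<alpha>) ! i then d else bot)"
        using LOC_T[of \<tau> ks "f \<tau> \<alpha>" n "TT ks n f x" d i g] a d le fW i by (simp add: Wt_def TT_def)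
      also have "\<dots> = inf (x ! i) d" using le_conj_nth[OF d(2)] a lx i gf by simp
      finally show "inf (TT ks n g (TT ks n f x) ! i) (inf (bconj \<tau> ks) (bconj \<alpha> x)) = inf (x ! i) (inf (bconj \<tau> ks) (bconj \<alpha> x))"
        by (simp add: d_def)
    qed
  qed
qed

lemma restr:
  assumes H: "\<And>\<tau> \<alpha>. length \<tau> = length ks \<Longrightarrow> bconj \<tau> ks \<noteq> bot \<Longrightarrow> \<alpha> \<in> Ut \<tau> \<Longrightarrow> s \<tau> \<alpha> = Ft \<tau> \<alpha>"
    and x: "x \<in> U"
  shows "TT ks n s x = F x"
proof -
  have lx: "length x = n" using x by (simp add: Ud)
  show ?thesis
  proof (rule nth_equalityI)
    show "length (TT ks n s x) = length (F x)" using lx x Fd lenF by (simp add: TT_def)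
    fix i assume "i < length (TT ks n s x)"
    then have i: "i < n" by (simp add: TT_def)
    have Fx: "F x ! i = beval (fes ! i) x" using Fd x i lenF by simp
    have fi: "fes ! i \<in> set fes" using i lenF by simp
    show "TT ks n s x ! i = F x ! i" unfolding Fx
    proof (rule pw[OF lx, where ks=ks])
      fix \<tau> \<alpha> assume a: "length \<tau> = length ks" "length \<alpha> = n" "inf (bconj \<tau> ks) (bconj \<alpha> x) \<noteq> bot"
      define d where "d = inf (bconj \<tau> ks) (bconj \<alpha> x)"
      have d: "d \<le> bconj \<tau> ks" "d \<le> bconj \<alpha> x" "d \<noteq> bot" using a by (auto simp: d_def)
    have cnz: "bconj \<tau> ks \<noteq> bot" using d(1,3) le_bot by metis
      have aU: "\<alpha> \<in> Ut \<tau>" using zero_not_ev[of \<tau> ks \<alpha> n x d eu] a d x bv cs by (simp add: Ud Ut_def)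
      have "inf (TT ks n s x ! i) d = (if s \<tau> \<alpha> ! i then d else bot)"
        using LOC_T[of \<tau> ks \<alpha> n x d i s] a d lx i by simp
      also have "\<dots> = (if ev ks \<tau> \<alpha> (fes ! i) then d else bot)"
        using H[OF a(1) cnz aU] i lenF by (auto simp: Ft_def)
      also have "\<dots> = inf (beval (fes ! i) x) d"
        using LOC_eval[of \<tau> ks \<alpha> n x d "fes ! i"] a d lx bv cs fi by simp
      finally show "inf (TT ks n s x ! i) (inf (bconj \<tau> ks) (bconj \<alpha> x)) = inf (beval (fes ! i) x) (inf (bconj \<tau> ks) (bconj \<alpha> x))"
        by (simp add: d_def)
    qed
  qed
qed

lemma finite_Wt: "finite (Wt \<tau>)"
proof -
  have "Wt \<tau> \<subseteq> set (List.n_lists n [True,False])" by (auto simp: Wt_def in_nlists)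
  then show ?thesis using finite_subset by blast
qed

definition "sig \<tau> = (SOME s. bij_betw s (Wt \<tau>) (Wt \<tau>) \<and> (\<forall>\<alpha>\<in>Ut \<tau>. s \<alpha> = Ft \<tau> \<alpha>))"
definition "rho \<tau> = the_inv_into (Wt \<tau>) (sig \<tau>)"

lemma sig_props: assumes "length \<tau> = length ks" "bconj \<tau> ks \<noteq> bot"
  shows "bij_betw (sig \<tau>) (Wt \<tau>) (Wt \<tau>) \<and> (\<forall>\<alpha>\<in>Ut \<tau>. sig \<tau> \<alpha> = Ft \<tau> \<alpha>)"
proof -
  have "\<exists>s. bij_betw s (Wt \<tau>) (Wt \<tau>) \<and> (\<forall>\<alpha>\<in>Ut \<tau>. s \<alpha> = Ft \<tau> \<alpha>)"
    using ext_perm[OF finite_Wt _ _ Ft_bij[OF assms]] Ut_Wt[OF assms] Vt_Wt[OF assms] by blast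
  then show ?thesis unfolding sig_def by (rule someI_ex)
qed

theorem main: "\<exists>F'. bool_iso n n F' W W \<and> (\<forall>x\<in>U. F' x = F x)"
proof -
  let ?F' = "TT ks n sig" and ?G = "TT ks n rho"
  have H1: "sig \<tau> \<alpha> \<in> Wt \<tau> \<and> rho \<tau> (sig \<tau> \<alpha>) = \<alpha>"
    if "length \<tau> = length ks" "bconj \<tau> ks \<noteq> bot" "\<alpha> \<in> Wt \<tau>" for \<tau> \<alpha>
    using sig_props[OF that(1,2)] that(3)
    by (auto simp: rho_def bij_betw_def the_inv_into_f_f)
  have H2: "rho \<tau> \<alpha> \<in> Wt \<tau> \<and> sig \<tau> (rho \<tau> \<alpha>) = \<alpha>"
    if "length \<tau> = length ks" "bconj \<tau> ks \<noteq> bot" "\<alpha> \<in> Wt \<tau>" for \<tau> \<alpha>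
    using sig_props[OF that(1,2)] that(3)
    by (auto simp: rho_def bij_betw_def f_the_inv_into_f the_inv_into_into)
  have img: "?F' ` W \<subseteq> W" using T1[of sig] H1 by blast
  have img2: "?G ` W \<subseteq> W" using T1[of rho] H2 by blast
  have bj: "bij_betw ?F' W W"
    by (rule bij_betw_byWitness[where f'="?G"]) (use T2[of sig rho] T2[of rho sig] H1 H2 img img2 in auto)
  have tr: "bool_trans n n ?F' W W"
    unfolding bool_trans_def
  proof (intro conjI exI[of _ "map (\<lambda>i x. beval (EE ks n sig i) x) [0..<n]"])
    show "?F' ` W \<subseteq> W" by (rule img)
    show "length (map (\<lambda>i x. beval (EE ks n sig i) x) [0..<n]) = n" by simp
    show "\<forall>g\<in>set (map (\<lambda>i x. beval (EE ks n sig i) x) [0..<n]). bool_fun n g"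
      by (auto simp: bool_fun_def intro: bvars_EE)
    show "\<forall>x\<in>W. ?F' x = map (\<lambda>g. g x) (map (\<lambda>i x. beval (EE ks n sig i) x) [0..<n])"
      by (simp add: TT_def)
  qed
  have "\<forall>x\<in>U. ?F' x = F x" using restr[of sig] sig_props by blast
  then show ?thesis using tr bj by (auto simp: bool_iso_def)
qed

end


lemma dom_expr: assumes "bool_domain n (U::'a::boolean_algebra list set)"
  obtains e where "bvars_below n e" "U = {x. length x = n \<and> beval e x = bot}"
proof -
  obtain f where f: "bool_fun n f" "U = {x\<in>bool_points n. f x = bot}" using assms by (auto simp: bool_domain_def)
  obtain e where e: "bvars_below n e" "\<forall>x\<in>bool_points n. f x = beval e x" using f(1) by (auto simp: bool_fun_def)
  have "U = {x. length x = n \<and> beval e x = bot}" using f(2) e(2) by (auto simp: bool_points_def)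
  then show ?thesis using that e(1) by blast
qed

theorem theorem1:
  fixes U V W :: "'a::boolean_algebra list set" and n :: nat
    and F :: "'a list \<Rightarrow> 'a list"
  assumes "bool_domain n U" and "bool_domain n V" and "bool_domain n W"
    and "U \<union> V \<subseteq> W"
    and "bool_iso n n F U V"
  shows "\<exists>F'. bool_iso n n F' W W \<and> (\<forall>x\<in>U. F' x = F x)"
proof -
  obtain eu where eu: "bvars_below n eu" "U = {x. length x = n \<and> beval eu x = bot}" using dom_expr[OF assms(1)] by blast
  obtain evv where evv: "bvars_below n evv" "V = {x. length x = n \<and> beval evv x = bot}" using dom_expr[OF assms(2)] by blast
  obtain ew where ew: "bvars_below n ew" "W = {x. length x = n \<and> beval ew x = bot}" using dom_expr[OF assms(3)] by blast
  obtain Fs where Fs: "length Fs = n" "\<forall>g\<in>set Fs. bool_fun n g" "\<forall>x\<in>U. F x = map (\<lambda>g. g x) Fs"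
    and bj: "bij_betw F U V"
    using assms(5) by (auto simp: bool_iso_def bool_trans_def)
  define ch where "ch = (\<lambda>g::'a list \<Rightarrow> 'a. SOME e::'a bexp. bvars_below n e \<and> (\<forall>x\<in>bool_points n. g x = beval e x))"
  have ch: "bvars_below n (ch g) \<and> (\<forall>x\<in>bool_points n. g x = beval (ch g) x)" if "g \<in> set Fs" for g
    unfolding ch_def
  proof (rule someI_ex)
    show "\<exists>e. bvars_below n e \<and> (\<forall>x\<in>bool_points n. g x = beval e x)"
      using Fs(2) that by (auto simp: bool_fun_def)
  qed
  define fes where "fes = map ch Fs"
  define ks where "ks = cl eu @ cl evv @ cl ew @ concat (map cl fes)"
  show ?thesis
  proof (cases "U = {}")
    case True
    have "bool_iso n n id W W"
      unfolding bool_iso_def bool_trans_def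
    proof (intro conjI exI[of _ "map (\<lambda>i x. x ! i) [0..<n]"])
      show "\<forall>g\<in>set (map (\<lambda>i x. x ! i) [0..<n]). bool_fun n g"
        by (auto simp: bool_fun_def intro!: exI[of _ "Var i" for i])
      show "\<forall>x\<in>W. id x = map (\<lambda>g. g x) (map (\<lambda>i x. x ! i) [0..<n])"
        using ew(2) by (auto simp: comp_def intro: nth_equalityI)
      show "id ` W \<subseteq> W" by simp
      show "length (map (\<lambda>i x. x ! i) [0..<n]) = n" by simp
      show "bij_betw id W W" by simp
    qed
    then show ?thesis using True by blast
  next
    case False
    interpret setting n ks eu evv ew fes F U V W
    proof
      show "\<forall>f\<in>set fes. bvars_below n f" using ch by (auto simp: fes_def)
      show "\<forall>f\<in>set fes. set (cl f) \<subseteq> set ks" by (auto simp: ks_def)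
      show "length fes = n" using Fs by (simp add: fes_def)
      show "\<forall>x\<in>U. F x = map (\<lambda>f. beval f x) fes"
        using Fs(3) ch eu(2) by (auto simp: fes_def bool_points_def)
      show "bvars_below n eu" "bvars_below n evv" "bvars_below n ew" by (fact eu(1) evv(1) ew(1))+
      show "set (cl eu) \<subseteq> set ks" "set (cl evv) \<subseteq> set ks" "set (cl ew) \<subseteq> set ks"
        by (auto simp: ks_def)
      show "U = {x. length x = n \<and> beval eu x = bot}" by (fact eu(2))
      show "V = {x. length x = n \<and> beval evv x = bot}" by (fact evv(2))
      show "W = {x. length x = n \<and> beval ew x = bot}" by (fact ew(2))
      show "U \<union> V \<subseteq> W" by (fact assms(4))
      show "bij_betw F U V" by (fact bj)
      show "U \<noteq> {}" by (fact False)
    qed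
    show ?thesis by (rule main)
  qed
qed

end
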